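(* Let $\mathbb V\subset\mathbb W$ be Hilbert spaces with bounded inclusion, $\mathbb V$ dense in $\mathbb W$ and $\mathbb V$ separable. Let $\mathcal L_N,\mathcal L:\mathbb V\to\mathbb W$ be bounded operators that are self-adjoint (as operators on $\mathbb W$ with dense domain $\mathbb V$) and have pure-point spectrum. Let $\lambda$ be an eigenvalue of $\mathcal L$ of finite geometric multiplicity and $\delta>0$ such that $\lambda$ is at distance more than $3\delta$ from all other elements of the spectrum of $\mathcal L$. Suppose there exists $N_0=N_0(\lambda,\delta)$ such that for $\delta\le|z-\lambda|\le2\delta$ and $N>N_0$, $z\,\mathrm{id}-\mathcal L_N$ is invertible on $\mathbb W$, and $$\|(z\,\mathrm{id}-\mathcal L)^{-1}(\mathcal L-\mathcal L_N)v\|_{\mathbb W}\to0,\qquad\|(z\,\mathrm{id}-\mathcal L_N)^{-1}(\mathcal L-\mathcal L_N)u\|_{\mathbb W}\to0$$ as $N\to\infty$, uniformly in $z$ with $\delta\le|z-\lambda|\le2\delta$, for all $\mathbb W$-normalized eigenfunctions $v$ of $\mathcal L_N$ and $u$ of $\mathcal L$ associated with eigenvalues lying in $\{z\in\mathbb C:|z-\lambda|\le\delta\}$. Then there exists $N_0'$ such that for $N>N_0'$ the geometric multiplicity of $\lambda$ equals the sum of the geometric multiplicities of the eigenvalues $\lambda'$ of $\mathcal L_N$ satisfying $|\lambda'-\lambda|<\delta$. *)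

theory Defs
  imports "HOL-Analysis.Analysis"
begin

text \<open>HOL-Analysis only provides real inner product spaces; complex Hilbert spaces
  are introduced here as a type class: a real normed vector space with a compatible
  complex scalar multiplication and a complex inner product inducing the norm
  (linear in the second, conjugate-linear in the first argument).\<close>

class complex_inner = real_normed_vector +
  fixes scaleC :: "complex \<Rightarrow> 'a \<Rightarrow> 'a" (infixr "*\<^sub>C" 75)
    and cinner :: "'a \<Rightarrow> 'a \<Rightarrow> complex"
  assumes scaleC_add_right: "a *\<^sub>C (x + y) = a *\<^sub>C x + a *\<^sub>C y"
    and scaleC_add_left: "(a + b) *\<^sub>C x = a *\<^sub>C x + b *\<^sub>C x"
    and scaleC_scaleC: "a *\<^sub>C (b *\<^sub>C x) = (a * b) *\<^sub>C x"
    and scaleC_one: "1 *\<^sub>C x = x"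
    and scaleC_of_real: "complex_of_real r *\<^sub>C x = r *\<^sub>R x"
    and cinner_commute: "cinner x y = cnj (cinner y x)"
    and cinner_add_right: "cinner x (y + z) = cinner x y + cinner x z"
    and cinner_scaleC_right: "cinner x (a *\<^sub>C y) = a * cinner x y"
    and cinner_norm: "cinner x x = complex_of_real ((norm x)\<^sup>2)"

class chilbert_space = complex_inner + complete_space

interpretation cvs: vector_space "scaleC :: complex \<Rightarrow> 'a::complex_inner \<Rightarrow> 'a"
  by unfold_locales (simp_all add: scaleC_add_right scaleC_add_left scaleC_scaleC scaleC_one)

definition clinear :: "('a::complex_inner \<Rightarrow> 'b::complex_inner) \<Rightarrow> bool" where
  "clinear f \<longleftrightarrow> (\<forall>x y. f (x + y) = f x + f y) \<and> (\<forall>a x. f (a *\<^sub>C x) = a *\<^sub>C f x)"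

definition bounded_clinear :: "('a::complex_inner \<Rightarrow> 'b::complex_inner) \<Rightarrow> bool" where
  "bounded_clinear f \<longleftrightarrow> clinear f \<and> (\<exists>K. \<forall>x. norm (f x) \<le> norm x * K)"

text \<open>Setting: \<iota> :: 'v \<Rightarrow> 'w is the (injective, bounded, dense) inclusion
  V \<subseteq> W; an operator T :: 'v \<Rightarrow> 'w is regarded as an unbounded operator on W with
  domain range \<iota>.\<close>

text \<open>Self-adjointness on W with domain V: T is symmetric and the domain of the
  adjoint T* is contained in the domain of T (so T* = T).\<close>
definition self_adjoint_on :: "('v::complex_inner \<Rightarrow> 'w::complex_inner) \<Rightarrow> ('v \<Rightarrow> 'w) \<Rightarrow> bool" where
  "self_adjoint_on \<iota> T \<longleftrightarrow>
     (\<forall>x y. cinner (T x) (\<iota> y) = cinner (\<iota> x) (T y)) \<and>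
     (\<forall>w w'. (\<forall>x. cinner (T x) w = cinner (\<iota> x) w') \<longrightarrow> w \<in> range \<iota>)"

definition eigenspace :: "('v::complex_inner \<Rightarrow> 'w::complex_inner) \<Rightarrow> ('v \<Rightarrow> 'w) \<Rightarrow> complex \<Rightarrow> 'v set" where
  "eigenspace \<iota> T \<mu> = {v. T v = \<mu> *\<^sub>C \<iota> v}"

definition is_eigenvalue :: "('v::complex_inner \<Rightarrow> 'w::complex_inner) \<Rightarrow> ('v \<Rightarrow> 'w) \<Rightarrow> complex \<Rightarrow> bool" where
  "is_eigenvalue \<iota> T \<mu> \<longleftrightarrow> (\<exists>v. v \<noteq> 0 \<and> v \<in> eigenspace \<iota> T \<mu>)"

definition finite_geom_mult :: "('v::complex_inner \<Rightarrow> 'w::complex_inner) \<Rightarrow> ('v \<Rightarrow> 'w) \<Rightarrow> complex \<Rightarrow> bool" where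
  "finite_geom_mult \<iota> T \<mu> \<longleftrightarrow>
     (\<exists>B. finite B \<and> B \<subseteq> eigenspace \<iota> T \<mu> \<and> cvs.span B = eigenspace \<iota> T \<mu>)"

definition geom_mult :: "('v::complex_inner \<Rightarrow> 'w::complex_inner) \<Rightarrow> ('v \<Rightarrow> 'w) \<Rightarrow> complex \<Rightarrow> nat" where
  "geom_mult \<iota> T \<mu> = cvs.dim (eigenspace \<iota> T \<mu>)"

definition pure_point_spectrum :: "('v::complex_inner \<Rightarrow> 'w::complex_inner) \<Rightarrow> ('v \<Rightarrow> 'w) \<Rightarrow> bool" where
  "pure_point_spectrum \<iota> T \<longleftrightarrow>
     closure (cvs.span (\<iota> ` (\<Union>\<mu>. eigenspace \<iota> T \<mu>))) = UNIV"

definition resolvent_ok :: "('v::complex_inner \<Rightarrow> 'w::complex_inner) \<Rightarrow> ('v \<Rightarrow> 'w) \<Rightarrow> complex \<Rightarrow> bool" where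
  "resolvent_ok \<iota> T z \<longleftrightarrow>
     bij (\<lambda>v. z *\<^sub>C \<iota> v - T v) \<and> bounded_clinear (\<iota> \<circ> inv (\<lambda>v. z *\<^sub>C \<iota> v - T v))"

definition cspectrum :: "('v::complex_inner \<Rightarrow> 'w::complex_inner) \<Rightarrow> ('v \<Rightarrow> 'w) \<Rightarrow> complex set" where
  "cspectrum \<iota> T = {z. \<not> resolvent_ok \<iota> T z}"

definition resolvent :: "('v::complex_inner \<Rightarrow> 'w::complex_inner) \<Rightarrow> ('v \<Rightarrow> 'w) \<Rightarrow> complex \<Rightarrow> 'w \<Rightarrow> 'w" where
  "resolvent \<iota> T z w = \<iota> (inv (\<lambda>v. z *\<^sub>C \<iota> v - T v) w)"

end

theory Submission
  imports Defs
begin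

section \<open>Basic inner product algebra\<close>

lemma cinner_add_left: "cinner (x + y) (z::'a::complex_inner) = cinner x z + cinner y z"
  by (metis cinner_commute cinner_add_right complex_cnj_add)

lemma cinner_scaleC_left: "cinner (a *\<^sub>C x) (y::'a::complex_inner) = cnj a * cinner x y"
  by (metis cinner_commute cinner_scaleC_right complex_cnj_mult complex_cnj_cnj)

lemma cinner_zero_right[simp]: "cinner x (0::'a::complex_inner) = 0"
  using cinner_add_right[of x 0 0] by simp

lemma cinner_zero_left[simp]: "cinner (0::'a::complex_inner) x = 0"
  using cinner_add_left[of 0 0 x] by simp

lemma cinner_minus_right: "cinner x (- y::'a::complex_inner) = - cinner x y"
  using cinner_add_right[of x y "-y"] by (simp add: eq_neg_iff_add_eq_0 add.commute)

lemma cinner_minus_left: "cinner (- x::'a::complex_inner) y = - cinner x y"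
  using cinner_add_left[of x "-x" y] by (simp add: eq_neg_iff_add_eq_0 add.commute)

lemma cinner_diff_right: "cinner x (y - z::'a::complex_inner) = cinner x y - cinner x z"
  using cinner_add_right[of x y "-z"] cinner_minus_right[of x z] by simp

lemma cinner_diff_left: "cinner (x - y::'a::complex_inner) z = cinner x z - cinner y z"
  using cinner_add_left[of x "-y" z] cinner_minus_left[of y z] by simp

lemma cinner_sum_right: "cinner x (\<Sum>i\<in>I. f i::'a::complex_inner) = (\<Sum>i\<in>I. cinner x (f i))"
  by (induct I rule: infinite_finite_induct) (simp_all add: cinner_add_right)

lemma cinner_sum_left: "cinner (\<Sum>i\<in>I. f i::'a::complex_inner) x = (\<Sum>i\<in>I. cinner (f i) x)"
  by (induct I rule: infinite_finite_induct) (simp_all add: cinner_add_left)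

lemma Re_cinner_self: "Re (cinner x (x::'a::complex_inner)) = (norm x)\<^sup>2"
  by (simp add: cinner_norm)

lemma cinner_self_eq_0[simp]: "cinner x x = 0 \<longleftrightarrow> (x::'a::complex_inner) = 0"
  by (simp add: cinner_norm)

lemma cinner_commute0: "cinner x y = 0 \<Longrightarrow> cinner y (x::'a::complex_inner) = 0"
  by (metis cinner_commute complex_cnj_zero)

lemma norm_scaleC: "norm (a *\<^sub>C x) = cmod a * norm (x::'a::complex_inner)"
proof -
  have "(norm (a *\<^sub>C x))\<^sup>2 = Re (cnj a * a * cinner x x)"
    by (metis Re_cinner_self cinner_scaleC_left cinner_scaleC_right mult.assoc)
  also have "\<dots> = (cmod a * norm x)\<^sup>2"
    by (simp only: cinner_norm mult.commute[of "cnj a" a] complex_norm_square[symmetric]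
          of_real_mult[symmetric] Re_complex_of_real power_mult_distrib)
  finally show ?thesis
    by (simp add: power2_eq_iff_nonneg)
qed

lemma pythag:
  assumes "cinner x y = 0"
  shows "(norm (x + y))\<^sup>2 = (norm x)\<^sup>2 + (norm (y::'a::complex_inner))\<^sup>2"
proof -
  have "cinner (x+y) (x+y) = cinner x x + cinner y y"
    using assms cinner_commute0[OF assms]
    by (simp add: cinner_add_left cinner_add_right)
  then have "Re (cinner (x+y) (x+y)) = Re (cinner x x) + Re (cinner y y)" by simp
  then show ?thesis by (simp add: Re_cinner_self)
qed

lemma pythag_sum:
  assumes "finite I" and "\<And>i j. i \<in> I \<Longrightarrow> j \<in> I \<Longrightarrow> i \<noteq> j \<Longrightarrow> cinner (f i) (f j) = 0"
  shows "(norm (\<Sum>i\<in>I. f i::'a::complex_inner))\<^sup>2 = (\<Sum>i\<in>I. (norm (f i))\<^sup>2)"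
  using assms
proof (induct I rule: finite_induct)
  case empty
  then show ?case by simp
next
  case (insert a I)
  have "cinner (f a) (\<Sum>i\<in>I. f i) = 0"
    using insert by (auto simp: cinner_sum_right intro!: sum.neutral)
  then show ?case using insert pythag[of "f a" "\<Sum>i\<in>I. f i"] by simp
qed

section \<open>Orthonormal sets and Bessel\<close>

definition orthonormal :: "'a::complex_inner set \<Rightarrow> bool" where
  "orthonormal Q \<longleftrightarrow> (\<forall>x\<in>Q. norm x = 1) \<and> (\<forall>x\<in>Q. \<forall>y\<in>Q. x \<noteq> y \<longrightarrow> cinner x y = 0)"

definition proj :: "'a::complex_inner set \<Rightarrow> 'a \<Rightarrow> 'a" where
  "proj Q x = (\<Sum>q\<in>Q. cinner q x *\<^sub>C q)"

lemma orthonormal_cinner_self: "orthonormal Q \<Longrightarrow> q \<in> Q \<Longrightarrow> cinner q q = 1"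
  by (simp add: orthonormal_def cinner_norm)

lemma cinner_proj:
  assumes "orthonormal Q" "finite Q" "q' \<in> Q"
  shows "cinner q' (proj Q x) = cinner q' x"
proof -
  have "cinner q' (proj Q x) = (\<Sum>q\<in>Q. cinner q x * cinner q' q)"
    by (simp add: proj_def cinner_sum_right cinner_scaleC_right)
  also have "\<dots> = cinner q' x * cinner q' q'"
  proof -
    have "cinner q' q = 0" if "q \<in> Q - {q'}" for q
      using assms(1,3) that unfolding orthonormal_def by (metis DiffE singletonI)
    then have "(\<Sum>q\<in>Q - {q'}. cinner q x * cinner q' q) = 0" by simp
    then show ?thesis using assms by (simp add: sum.remove[of _ q'])
  qed
  finally show ?thesis using orthonormal_cinner_self[OF assms(1,3)] by simp
qed

lemma proj_in_span: "proj Q x \<in> cvs.span Q"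
  unfolding proj_def by (intro cvs.span_sum cvs.span_scale cvs.span_base)

lemma span_orth:
  assumes "finite Q" "y \<in> cvs.span Q" "\<And>q. q \<in> Q \<Longrightarrow> cinner q w = 0"
  shows "cinner y (w::'a::complex_inner) = 0"
proof -
  obtain u where "y = (\<Sum>v\<in>Q. u v *\<^sub>C v)"
    using assms(2) cvs.span_finite[OF assms(1)] by auto
  then show ?thesis using assms(3)
    by (simp add: cinner_sum_left cinner_scaleC_left)
qed

lemma norm_proj:
  assumes "orthonormal Q" "finite Q"
  shows "(norm (proj Q x))\<^sup>2 = (\<Sum>q\<in>Q. (cmod (cinner q x))\<^sup>2)"
  unfolding proj_def
  using assms
  by (subst pythag_sum) (auto simp: orthonormal_def cinner_scaleC_left cinner_scaleC_right norm_scaleC)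

lemma bessel_dist:
  assumes "orthonormal Q" "finite Q" "y \<in> cvs.span Q" "norm (x - y) \<le> r"
  shows "(norm x)\<^sup>2 - (\<Sum>q\<in>Q. (cmod (cinner q x))\<^sup>2) \<le> r\<^sup>2"
proof -
  let ?p = "proj Q x"
  have o1: "cinner q (x - ?p) = 0" if "q \<in> Q" for q
    using cinner_proj[OF assms(1,2) that] by (simp add: cinner_diff_right)
  have orth: "cinner z (x - ?p) = 0" if "z \<in> cvs.span Q" for z
    using span_orth[OF assms(2) that o1] by simp
  have "(norm x)\<^sup>2 = (norm (?p + (x - ?p)))\<^sup>2" by simp
  also have "\<dots> = (norm ?p)\<^sup>2 + (norm (x - ?p))\<^sup>2"
    by (rule pythag[OF orth[OF proj_in_span]])
  finally have 1: "(norm x)\<^sup>2 - (\<Sum>q\<in>Q. (cmod (cinner q x))\<^sup>2) = (norm (x - ?p))\<^sup>2"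
    using norm_proj[OF assms(1,2)] by simp
  have "?p - y \<in> cvs.span Q" using assms(3) proj_in_span cvs.span_diff by blast
  have "(norm (x - y))\<^sup>2 = (norm ((?p - y) + (x - ?p)))\<^sup>2" by (simp add: algebra_simps)
  also have "\<dots> = (norm (?p - y))\<^sup>2 + (norm (x - ?p))\<^sup>2"
    by (rule pythag[OF orth]) (use \<open>?p - y \<in> cvs.span Q\<close> in auto)
  finally have "(norm (x - ?p))\<^sup>2 \<le> (norm (x - y))\<^sup>2" by simp
  also have "\<dots> \<le> r\<^sup>2" using assms(4) by (simp add: power_mono)
  finally show ?thesis using 1 by simp
qed

lemma bessel:
  assumes "orthonormal Q" "finite Q"
  shows "(\<Sum>q\<in>Q. (cmod (cinner q x))\<^sup>2) \<le> (norm x)\<^sup>2"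
proof -
  have "(norm (proj Q x))\<^sup>2 \<le> (norm x)\<^sup>2"
  proof -
    have orth: "cinner (proj Q x) (x - proj Q x) = 0"
    proof -
      have "cinner q (x - proj Q x) = 0" if "q \<in> Q" for q
        using cinner_proj[OF assms that] by (simp add: cinner_diff_right)
      then show ?thesis using span_orth[OF assms(2) proj_in_span] by blast
    qed
    have "(norm x)\<^sup>2 = (norm (proj Q x + (x - proj Q x)))\<^sup>2" by simp
    also have "\<dots> = (norm (proj Q x))\<^sup>2 + (norm (x - proj Q x))\<^sup>2" by (rule pythag[OF orth])
    finally show ?thesis by simp
  qed
  then show ?thesis using norm_proj[OF assms] by simp
qed

lemma counting:
  fixes Q F :: "'a::complex_inner set"
  assumes "orthonormal Q" "finite Q" "orthonormal F" "finite F"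
    and close: "\<And>f. f \<in> F \<Longrightarrow> \<exists>y\<in>cvs.span Q. norm (f - y) \<le> r"
  shows "real (card F) * (1 - r\<^sup>2) \<le> real (card Q)"
proof -
  have "real (card F) * (1 - r\<^sup>2) = (\<Sum>f\<in>F. 1 - r\<^sup>2)" by simp
  also have "\<dots> \<le> (\<Sum>f\<in>F. \<Sum>q\<in>Q. (cmod (cinner q f))\<^sup>2)"
  proof (rule sum_mono)
    fix f assume f: "f \<in> F"
    then obtain y where "y \<in> cvs.span Q" "norm (f - y) \<le> r" using close by blast
    from bessel_dist[OF assms(1,2) this] f assms(3) show "1 - r\<^sup>2 \<le> (\<Sum>q\<in>Q. (cmod (cinner q f))\<^sup>2)"
      by (simp add: orthonormal_def)
  qed
  also have "\<dots> = (\<Sum>q\<in>Q. \<Sum>f\<in>F. (cmod (cinner f q))\<^sup>2)"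
    by (subst sum.swap) (metis (no_types, lifting) cinner_commute complex_mod_cnj sum.cong)
  also have "\<dots> \<le> (\<Sum>q\<in>Q. 1)"
  proof (rule sum_mono)
    fix q assume "q \<in> Q"
    then have "norm q = 1" using assms(1) by (simp add: orthonormal_def)
    then show "(\<Sum>f\<in>F. (cmod (cinner f q))\<^sup>2) \<le> 1" using bessel[OF assms(3,4), of q] by simp
  qed
  finally show ?thesis by simp
qed


lemma orthonormal_independent:
  assumes "orthonormal Q" "finite Q"
  shows "cvs.independent Q"
proof
  assume "cvs.dependent Q"
  then obtain a where a: "a \<in> Q" "a \<in> cvs.span (Q - {a})" by (auto simp: cvs.dependent_def)
  have "cinner q a = 0" if "q \<in> Q - {a}" for q
    using assms(1) a(1) that unfolding orthonormal_def by (metis DiffE singletonI)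
  then have "cinner a a = 0" using span_orth[of "Q - {a}" a a] a assms(2) by blast
  then show False using orthonormal_cinner_self[OF assms(1) a(1)] by simp
qed

lemma gram_schmidt:
  fixes B :: "'a::complex_inner set"
  assumes "finite B"
  shows "\<exists>Q. finite Q \<and> orthonormal Q \<and> cvs.span Q = cvs.span B \<and> card Q \<le> card B"
  using assms
proof (induct B rule: finite_induct)
  case empty
  then show ?case by (intro exI[of _ "{}"]) (auto simp: orthonormal_def)
next
  case (insert b B)
  then obtain Q where Q: "finite Q" "orthonormal Q" "cvs.span Q = cvs.span B" "card Q \<le> card B"
    by blast
  show ?case
  proof (cases "b \<in> cvs.span Q")
    case True
    then have "cvs.span (insert b B) = cvs.span B"
      using Q(3) cvs.span_redundant by auto
    then show ?thesis using Q insert by (intro exI[of _ Q]) auto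
  next
    case False
    define b' where "b' = b - proj Q b"
    have b'0: "b' \<noteq> 0"
      using False proj_in_span[of Q b] unfolding b'_def by auto
    define q where "q = complex_of_real (1 / norm b') *\<^sub>C b'"
    have nq: "norm q = 1" using b'0 by (simp add: q_def norm_scaleC norm_divide)
    have ob': "cinner q0 b' = 0" if "q0 \<in> Q" for q0
      using cinner_proj[OF Q(2,1) that, of b] by (simp add: b'_def cinner_diff_right)
    have oq: "cinner q0 q = 0" if "q0 \<in> Q" for q0
      using ob'[OF that] by (simp add: q_def cinner_scaleC_right)
    have qQ: "q \<notin> Q"
    proof
      assume "q \<in> Q"
      then have "cinner q q = 0" using oq by blast
      then show False using nq by simp
    qed
    have orth: "orthonormal (insert q Q)"
      using Q(2) nq oq cinner_commute0[OF oq] unfolding orthonormal_def by auto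
    have bq: "b = complex_of_real (norm b') *\<^sub>C q + proj Q b"
      using b'0 by (simp add: q_def b'_def cvs.scale_scale scaleC_of_real)
    have "cvs.span (insert q Q) = cvs.span (insert b B)"
    proof (rule cvs.span_eq[THEN iffD2], rule conjI)
      show "insert q Q \<subseteq> cvs.span (insert b B)"
      proof -
        have "Q \<subseteq> cvs.span (insert b B)"
          using Q(3) cvs.span_superset cvs.span_mono[of B "insert b B"] by blast
        then have "cvs.span Q \<subseteq> cvs.span (insert b B)"
          using cvs.span_minimal cvs.subspace_span by blast
        moreover have "b \<in> cvs.span (insert b B)" by (simp add: cvs.span_base)
        ultimately have "q \<in> cvs.span (insert b B)"
          unfolding q_def b'_def using proj_in_span cvs.span_scale cvs.span_diff by blast
        then show ?thesis using \<open>Q \<subseteq> cvs.span (insert b B)\<close> by blast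
      qed
      show "insert b B \<subseteq> cvs.span (insert q Q)"
      proof -
        have "cvs.span Q \<subseteq> cvs.span (insert q Q)" by (rule cvs.span_mono) blast
        then have B: "B \<subseteq> cvs.span (insert q Q)" using Q(3) cvs.span_superset by blast
        have "q \<in> cvs.span (insert q Q)" by (simp add: cvs.span_base)
        then have "b \<in> cvs.span (insert q Q)"
          using bq proj_in_span[of Q b] \<open>cvs.span Q \<subseteq> cvs.span (insert q Q)\<close>
          by (metis cvs.span_add cvs.span_scale subsetD)
        then show ?thesis using B by blast
      qed
    qed
    then show ?thesis
      using orth Q(1,4) qQ insert(1,2) by (intro exI[of _ "insert q Q"]) auto
  qed
qed

lemma gram_schmidt_indep:
  fixes B :: "'a::complex_inner set"
  assumes "finite B" "cvs.independent B"
  obtains Q where "finite Q" "orthonormal Q" "cvs.span Q = cvs.span B" "card Q = card B"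
proof -
  obtain Q where Q: "finite Q" "orthonormal Q" "cvs.span Q = cvs.span B"
    using gram_schmidt[OF assms(1)] by blast
  have "card Q = card B"
    using cvs.dim_span_eq_card_independent[OF orthonormal_independent[OF Q(2,1)]]
      cvs.dim_span_eq_card_independent[OF assms(2)] Q(3) by simp
  then show ?thesis using Q that by blast
qed

section \<open>Operators\<close>

lemma clinear_module_hom: "clinear f \<Longrightarrow> module_hom scaleC scaleC f"
  unfolding clinear_def module_hom_iff by (simp add: cvs.module_axioms)

lemma clinear_zero: "clinear f \<Longrightarrow> f 0 = 0"
  using module_hom.zero[OF clinear_module_hom] by blast

lemma clinear_diff: "clinear f \<Longrightarrow> f (x - y) = f x - f y"
  using module_hom.diff[OF clinear_module_hom] by blast

lemma clinear_add: "clinear f \<Longrightarrow> f (x + y) = f x + f y"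
  by (simp add: clinear_def)

lemma clinear_scale: "clinear f \<Longrightarrow> f (a *\<^sub>C x) = a *\<^sub>C f x"
  by (simp add: clinear_def)

lemma clinear_sum: "clinear f \<Longrightarrow> f (sum g A) = (\<Sum>x\<in>A. f (g x))"
  using module_hom.sum[OF clinear_module_hom] by blast

lemma eigenspace_subspace:
  assumes "clinear \<iota>" "clinear T"
  shows "cvs.subspace (eigenspace \<iota> T \<mu>)"
  unfolding cvs.subspace_def eigenspace_def
  using assms by (auto simp: clinear_zero clinear_add clinear_scale cvs.scale_right_distrib cvs.scale_left_commute)

definition symmetric_op :: "('v::complex_inner \<Rightarrow> 'w::complex_inner) \<Rightarrow> ('v \<Rightarrow> 'w) \<Rightarrow> bool" where
  "symmetric_op \<iota> T \<longleftrightarrow> (\<forall>x y. cinner (T x) (\<iota> y) = cinner (\<iota> x) (T y))"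

lemma self_adjoint_symmetric: "self_adjoint_on \<iota> T \<Longrightarrow> symmetric_op \<iota> T"
  by (simp add: self_adjoint_on_def symmetric_op_def)

lemma eig_orth:
  assumes "symmetric_op \<iota> T" "e \<in> eigenspace \<iota> T \<nu>" "e' \<in> eigenspace \<iota> T \<nu>'" "\<nu> \<noteq> \<nu>'"
  shows "cinner (\<iota> e) (\<iota> e') = 0"
proof -
  have sym: "cinner (T x) (\<iota> y) = cinner (\<iota> x) (T y)" for x y
    using assms(1) by (simp add: symmetric_op_def)
  have 1: "cnj \<nu> * cinner (\<iota> e) (\<iota> e') = \<nu>' * cinner (\<iota> e) (\<iota> e')"
    using sym[of e e'] assms(2,3) by (simp add: eigenspace_def cinner_scaleC_left cinner_scaleC_right)
  have 2: "cnj \<nu> * cinner (\<iota> e) (\<iota> e) = \<nu> * cinner (\<iota> e) (\<iota> e)"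
    using sym[of e e] assms(2) by (simp add: eigenspace_def cinner_scaleC_left cinner_scaleC_right)
  have 3: "cnj \<nu>' * cinner (\<iota> e') (\<iota> e') = \<nu>' * cinner (\<iota> e') (\<iota> e')"
    using sym[of e' e'] assms(3) by (simp add: eigenspace_def cinner_scaleC_left cinner_scaleC_right)
  show ?thesis
  proof (cases "\<iota> e = 0 \<or> \<iota> e' = 0")
    case True
    then show ?thesis by auto
  next
    case False
    then have "cnj \<nu> = \<nu>" "cnj \<nu>' = \<nu>'" using 2 3 by auto
    then show ?thesis using 1 assms(4) by auto
  qed
qed

lemma eig_not_resolvent:
  assumes "clinear \<iota>" "clinear T" "e \<in> eigenspace \<iota> T \<nu>" "e \<noteq> 0"
  shows "\<not> resolvent_ok \<iota> T \<nu>"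
proof
  assume "resolvent_ok \<iota> T \<nu>"
  then have "inj (\<lambda>v. \<nu> *\<^sub>C \<iota> v - T v)" by (simp add: resolvent_ok_def bij_is_inj)
  moreover have "\<nu> *\<^sub>C \<iota> e - T e = \<nu> *\<^sub>C \<iota> 0 - T 0"
    using assms by (simp add: eigenspace_def clinear_zero)
  ultimately show False using assms(4) by (metis (mono_tags, lifting) injD)
qed

lemma resolvent_eq: "resolvent \<iota> T z = \<iota> \<circ> inv (\<lambda>v. z *\<^sub>C \<iota> v - T v)"
  by (simp add: resolvent_def fun_eq_iff)

lemma resolvent_bounded: "resolvent_ok \<iota> T z \<Longrightarrow> bounded_clinear (resolvent \<iota> T z)"
  by (simp add: resolvent_ok_def resolvent_eq)

lemma resolvent_clinear: "resolvent_ok \<iota> T z \<Longrightarrow> clinear (resolvent \<iota> T z)"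
  using resolvent_bounded bounded_clinear_def by blast

lemma resolvent_apply:
  assumes "resolvent_ok \<iota> T z"
  shows "resolvent \<iota> T z (z *\<^sub>C \<iota> v - T v) = \<iota> v"
proof -
  have "bij (\<lambda>v. z *\<^sub>C \<iota> v - T v)" using assms by (simp add: resolvent_ok_def)
  then show ?thesis using inv_f_f[OF bij_is_inj[OF \<open>bij _\<close>]] by (simp add: resolvent_def)
qed

lemma resolvent_eig:
  assumes "clinear \<iota>" "clinear T" "resolvent_ok \<iota> T z" "e \<in> eigenspace \<iota> T \<nu>"
  shows "resolvent \<iota> T z (\<iota> e) = (1 / (z - \<nu>)) *\<^sub>C \<iota> e"
proof (cases "e = 0")
  case True
  then show ?thesis using assms resolvent_clinear[OF assms(3)] by (simp add: clinear_zero)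
next
  case False
  then have "z \<noteq> \<nu>" using eig_not_resolvent[OF assms(1,2,4)] assms(3) by blast
  let ?e = "(1 / (z - \<nu>)) *\<^sub>C e"
  have zz: "z / (z - \<nu>) - \<nu> / (z - \<nu>) = 1" using \<open>z \<noteq> \<nu>\<close>
    by (simp add: diff_divide_distrib[symmetric])
  have "z *\<^sub>C \<iota> ?e - T ?e = \<iota> e"
    using assms(4) \<open>z \<noteq> \<nu>\<close> zz
    by (simp add: eigenspace_def clinear_scale[OF assms(1)] clinear_scale[OF assms(2)]
        cvs.scale_left_commute[of _ \<nu>] cvs.scale_left_diff_distrib[symmetric])
  then have "resolvent \<iota> T z (\<iota> e) = \<iota> ?e"
    using resolvent_apply[OF assms(3), of ?e] by simp
  then show ?thesis by (simp add: clinear_scale[OF assms(1)])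
qed


lemma span_eig_decomp:
  assumes "clinear \<iota>" "clinear T" "x \<in> cvs.span (\<iota> ` (\<Union>\<mu>. eigenspace \<iota> T \<mu>))"
  shows "\<exists>S g. finite S \<and> (\<forall>\<nu>. g \<nu> \<in> eigenspace \<iota> T \<nu>) \<and> x = (\<Sum>\<nu>\<in>S. \<iota> (g \<nu>))"
  using assms(3)
proof (induct rule: cvs.span_induct_alt)
  case base
  show ?case
    by (intro exI[of _ "{}"] exI[of _ "\<lambda>_. 0"])
       (simp add: cvs.subspace_0[OF eigenspace_subspace[OF assms(1,2)]])
next
  case (step c x y)
  then obtain e \<mu> where x: "x = \<iota> e" "e \<in> eigenspace \<iota> T \<mu>" by blast
  from step obtain S g where S: "finite S" "\<forall>\<nu>. g \<nu> \<in> eigenspace \<iota> T \<nu>" "y = (\<Sum>\<nu>\<in>S. \<iota> (g \<nu>))"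
    by blast
  have sub: "cvs.subspace (eigenspace \<iota> T \<nu>)" for \<nu> by (rule eigenspace_subspace[OF assms(1,2)])
  define g' where "g' = g(\<mu> := c *\<^sub>C e + (if \<mu> \<in> S then g \<mu> else 0))"
  have g': "\<forall>\<nu>. g' \<nu> \<in> eigenspace \<iota> T \<nu>"
    using S(2) x(2) sub
    by (auto simp: g'_def cvs.subspace_add cvs.subspace_scale cvs.subspace_0)
  have "(\<Sum>\<nu>\<in>insert \<mu> S. \<iota> (g' \<nu>)) = \<iota> (g' \<mu>) + (\<Sum>\<nu>\<in>S - {\<mu>}. \<iota> (g' \<nu>))"
    using S(1) by (simp add: sum.insert_remove)
  also have "(\<Sum>\<nu>\<in>S - {\<mu>}. \<iota> (g' \<nu>)) = (\<Sum>\<nu>\<in>S - {\<mu>}. \<iota> (g \<nu>))"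
    by (rule sum.cong) (auto simp: g'_def)
  also have "\<iota> (g' \<mu>) = c *\<^sub>C \<iota> e + (if \<mu> \<in> S then \<iota> (g \<mu>) else 0)"
    by (simp add: g'_def clinear_add[OF assms(1)] clinear_scale[OF assms(1)] clinear_zero[OF assms(1)])
  also have "y = (if \<mu> \<in> S then \<iota> (g \<mu>) else 0) + (\<Sum>\<nu>\<in>S - {\<mu>}. \<iota> (g \<nu>))"
    using S(1,3) by (simp add: sum.remove)
  ultimately have "(\<Sum>\<nu>\<in>insert \<mu> S. \<iota> (g' \<nu>)) = c *\<^sub>C x + y"
    using x(1) by (simp add: algebra_simps)
  then show ?case using g' S(1) by (intro exI[of _ "insert \<mu> S"] exI[of _ g']) auto
qed

lemma approx_lemma:
  fixes \<iota> :: "'v::complex_inner \<Rightarrow> 'w::complex_inner" and T :: "'v \<Rightarrow> 'w"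
  assumes cl: "clinear \<iota>" "clinear T" and sym: "symmetric_op \<iota> T"
    and pp: "pure_point_spectrum \<iota> T" and rok: "resolvent_ok \<iota> T z"
    and c: "c > 0" and eta: "\<eta> > 0"
    and hyp: "\<And>\<nu> e. e \<in> eigenspace \<iota> T \<nu> \<Longrightarrow> e \<noteq> 0 \<Longrightarrow> \<nu> \<notin> S \<Longrightarrow> c * cmod (z - \<nu>) \<le> cmod (\<nu> - \<mu>)"
  shows "\<exists>y \<in> cvs.span (\<iota> ` (\<Union>\<nu>\<in>S. eigenspace \<iota> T \<nu>)).
           c * norm (x - y) \<le> norm ((z - \<mu>) *\<^sub>C resolvent \<iota> T z x - x) + \<eta>"
proof -
  let ?R = "resolvent \<iota> T z"
  define A where "A w = (z - \<mu>) *\<^sub>C ?R w - w" for w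
  have Rl: "clinear ?R" using resolvent_clinear[OF rok] .
  obtain K where K: "\<And>w. norm (?R w) \<le> norm w * K"
    using resolvent_bounded[OF rok] unfolding bounded_clinear_def by blast
  define K' where "K' = max K 0"
  have K': "norm (?R w) \<le> norm w * K'" for w
    using K[of w] unfolding K'_def by (meson max.cobounded1 mult_left_mono norm_ge_zero order_trans)
  have K'0: "K' \<ge> 0" by (simp add: K'_def)
  have Anorm: "norm (A w) \<le> (cmod (z - \<mu>) * K' + 1) * norm w" for w
  proof -
    have "norm (A w) \<le> norm ((z - \<mu>) *\<^sub>C ?R w) + norm w"
      unfolding A_def by (rule norm_triangle_ineq4)
    also have "\<dots> = cmod (z - \<mu>) * norm (?R w) + norm w" by (simp add: norm_scaleC)
    also have "\<dots> \<le> cmod (z - \<mu>) * (norm w * K') + norm w"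
      using K'[of w] by (simp add: mult_left_mono)
    finally show ?thesis by (simp add: algebra_simps)
  qed
  have Alin: "A x' = A x + A (x' - x)" for x'
  proof -
    have "?R x' = ?R x + ?R (x' - x)" using clinear_add[OF Rl, of x "x' - x"] by simp
    then show ?thesis unfolding A_def by (simp add: cvs.scale_right_distrib algebra_simps)
  qed
  define M where "M = c + cmod (z - \<mu>) * K' + 1"
  have M: "M > 0" using c K'0 by (simp add: M_def add_pos_nonneg)
  define \<eta>' where "\<eta>' = \<eta> / M"
  have \<eta>': "\<eta>' > 0" using eta M by (simp add: \<eta>'_def)
  have "x \<in> closure (cvs.span (\<iota> ` (\<Union>\<mu>. eigenspace \<iota> T \<mu>)))"
    using pp by (simp add: pure_point_spectrum_def)
  then obtain x' where x': "x' \<in> cvs.span (\<iota> ` (\<Union>\<mu>. eigenspace \<iota> T \<mu>))" "dist x' x < \<eta>'"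
    using closure_approachable \<eta>' by blast
  obtain S' g where g: "finite S'" "\<forall>\<nu>. g \<nu> \<in> eigenspace \<iota> T \<nu>" "x' = (\<Sum>\<nu>\<in>S'. \<iota> (g \<nu>))"
    using span_eig_decomp[OF cl x'(1)] by blast
  define y where "y = (\<Sum>\<nu>\<in>S' \<inter> S. \<iota> (g \<nu>))"
  have yspan: "y \<in> cvs.span (\<iota> ` (\<Union>\<nu>\<in>S. eigenspace \<iota> T \<nu>))"
    unfolding y_def using g(2) by (intro cvs.span_sum cvs.span_base) blast
  have xy: "x' - y = (\<Sum>\<nu>\<in>S' - S. \<iota> (g \<nu>))"
    unfolding y_def g(3) using sum.Int_Diff[OF g(1), of _ S] by (simp add: algebra_simps)
  define r where "r \<nu> = (z - \<mu>) / (z - \<nu>) - 1" for \<nu>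
  have Ae: "A (\<iota> (g \<nu>)) = r \<nu> *\<^sub>C \<iota> (g \<nu>)" for \<nu>
    unfolding A_def r_def resolvent_eig[OF cl rok g(2)[rule_format]]
    by (simp add: cvs.scale_left_diff_distrib)
  have Ax': "A x' = (\<Sum>\<nu>\<in>S'. r \<nu> *\<^sub>C \<iota> (g \<nu>))"
  proof -
    have "A x' = (\<Sum>\<nu>\<in>S'. A (\<iota> (g \<nu>)))"
      unfolding A_def g(3) clinear_sum[OF Rl] cvs.scale_sum_right by (simp add: sum_subtractf)
    then show ?thesis using Ae by simp
  qed
  have orth: "cinner (a *\<^sub>C \<iota> (g \<nu>)) (b *\<^sub>C \<iota> (g \<nu>')) = 0" if "\<nu> \<noteq> \<nu>'" for a b \<nu> \<nu>'
    using eig_orth[OF sym g(2)[rule_format] g(2)[rule_format] that]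
    by (simp add: cinner_scaleC_left cinner_scaleC_right)
  have rbound: "c * norm (\<iota> (g \<nu>)) \<le> cmod (r \<nu>) * norm (\<iota> (g \<nu>))" if "\<nu> \<notin> S" for \<nu>
  proof (cases "g \<nu> = 0")
    case True
    then show ?thesis by (simp add: clinear_zero[OF cl(1)])
  next
    case False
    then have "z \<noteq> \<nu>" using eig_not_resolvent[OF cl g(2)[rule_format]] rok by blast
    then have "r \<nu> = (\<nu> - \<mu>) / (z - \<nu>)" by (simp add: r_def field_simps)
    then have "cmod (r \<nu>) = cmod (\<nu> - \<mu>) / cmod (z - \<nu>)" by (simp add: norm_divide)
    moreover have "c * cmod (z - \<nu>) \<le> cmod (\<nu> - \<mu>)" using hyp[OF g(2)[rule_format] False that] .
    ultimately have "c \<le> cmod (r \<nu>)" using \<open>z \<noteq> \<nu>\<close> by (simp add: pos_le_divide_eq)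
    then show ?thesis by (simp add: mult_right_mono)
  qed
  have "(c * norm (x' - y))\<^sup>2 = c\<^sup>2 * (\<Sum>\<nu>\<in>S' - S. (norm (\<iota> (g \<nu>)))\<^sup>2)"
  proof -
    have "(norm (\<Sum>\<nu>\<in>S' - S. \<iota> (g \<nu>)))\<^sup>2 = (\<Sum>\<nu>\<in>S' - S. (norm (\<iota> (g \<nu>)))\<^sup>2)"
    proof (rule pythag_sum)
      show "finite (S' - S)" using g(1) by simp
      fix i j assume "i \<in> S' - S" "j \<in> S' - S" "i \<noteq> j"
      show "cinner (\<iota> (g i)) (\<iota> (g j)) = 0"
        using eig_orth[OF sym g(2)[rule_format] g(2)[rule_format] \<open>i \<noteq> j\<close>] .
    qed
    note P = this
    show ?thesis unfolding xy power_mult_distrib P by (rule refl)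
  qed
  also have "\<dots> = (\<Sum>\<nu>\<in>S' - S. (c * norm (\<iota> (g \<nu>)))\<^sup>2)"
    by (simp add: sum_distrib_left power_mult_distrib)
  also have "\<dots> \<le> (\<Sum>\<nu>\<in>S' - S. (cmod (r \<nu>) * norm (\<iota> (g \<nu>)))\<^sup>2)"
    using rbound c by (intro sum_mono power_mono) auto
  also have "\<dots> \<le> (\<Sum>\<nu>\<in>S'. (cmod (r \<nu>) * norm (\<iota> (g \<nu>)))\<^sup>2)"
    using g(1) by (intro sum_mono2) auto
  also have "\<dots> = (norm (A x'))\<^sup>2"
  proof -
    have "(norm (\<Sum>\<nu>\<in>S'. r \<nu> *\<^sub>C \<iota> (g \<nu>)))\<^sup>2 = (\<Sum>\<nu>\<in>S'. (norm (r \<nu> *\<^sub>C \<iota> (g \<nu>)))\<^sup>2)"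
    proof (rule pythag_sum)
      show "finite S'" using g(1) .
      fix i j assume "i \<in> S'" "j \<in> S'" "i \<noteq> j"
      show "cinner (r i *\<^sub>C \<iota> (g i)) (r j *\<^sub>C \<iota> (g j)) = 0" by (rule orth[OF \<open>i \<noteq> j\<close>])
    qed
    then show ?thesis unfolding Ax' by (simp only: norm_scaleC)
  qed
  finally have 1: "c * norm (x' - y) \<le> norm (A x')"
    by (rule power2_le_imp_le[OF _ norm_ge_zero])
  have "c * norm (x - y) \<le> c * norm (x - x') + c * norm (x' - y)"
    using c norm_triangle_ineq[of "x - x'" "x' - y"] by (simp add: distrib_left[symmetric] mult_left_mono)
  also have "\<dots> \<le> c * \<eta>' + norm (A x')"
  proof -
    have "norm (x - x') \<le> \<eta>'" using x'(2) by (simp add: dist_norm norm_minus_commute)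
    then have "c * norm (x - x') \<le> c * \<eta>'" using c by (simp add: mult_left_mono)
    then show ?thesis using 1 by linarith
  qed
  also have "norm (A x') \<le> norm (A x) + norm (A (x' - x))"
    using Alin[of x'] norm_triangle_ineq by metis
  also have "norm (A (x' - x)) \<le> (cmod (z - \<mu>) * K' + 1) * \<eta>'"
  proof -
    have "norm (x' - x) \<le> \<eta>'" using x'(2) by (simp add: dist_norm)
    moreover have "0 \<le> cmod (z - \<mu>) * K' + 1" using K'0 by simp
    ultimately have "(cmod (z - \<mu>) * K' + 1) * norm (x' - x) \<le> (cmod (z - \<mu>) * K' + 1) * \<eta>'"
      by (rule mult_left_mono)
    then show ?thesis using Anorm[of "x' - x"] by linarith
  qed
  finally have "c * norm (x - y) \<le> norm (A x) + M * \<eta>'"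
    by (simp add: M_def algebra_simps)
  also have "M * \<eta>' = \<eta>" using M by (simp add: \<eta>'_def)
  finally show ?thesis using yspan unfolding A_def by blast
qed


lemma indep_onb:
  fixes \<iota> :: "'v::complex_inner \<Rightarrow> 'w::complex_inner"
  assumes "clinear \<iota>" "inj \<iota>" "finite B" "cvs.independent B"
  shows "\<exists>Q. finite Q \<and> orthonormal Q \<and> cvs.span Q = \<iota> ` cvs.span B \<and> card Q = card B"
proof -
  have mh: "module_hom scaleC scaleC \<iota>" by (rule clinear_module_hom[OF assms(1)])
  have ind: "cvs.independent (\<iota> ` B)"
    using module_hom.independent_inj_image[OF mh assms(4) assms(2)] .
  have card: "card (\<iota> ` B) = card B" using assms(2) by (simp add: card_image inj_on_subset)
  obtain Q where "finite Q" "orthonormal Q" "cvs.span Q = cvs.span (\<iota> ` B)" "card Q = card (\<iota> ` B)"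
    using gram_schmidt_indep[OF finite_imageI[OF assms(3)] ind] by blast
  then show ?thesis using card module_hom.span_image[OF mh, of B] by auto
qed

lemma eig_onb:
  fixes \<iota> :: "'v::complex_inner \<Rightarrow> 'w::complex_inner"
  assumes "clinear \<iota>" "inj \<iota>" "clinear T" "finite_geom_mult \<iota> T \<mu>"
  shows "\<exists>Q. finite Q \<and> orthonormal Q \<and> cvs.span Q = \<iota> ` eigenspace \<iota> T \<mu> \<and> card Q = geom_mult \<iota> T \<mu>"
proof -
  let ?E = "eigenspace \<iota> T \<mu>"
  have sub: "cvs.subspace ?E" by (rule eigenspace_subspace[OF assms(1,3)])
  obtain B0 where B0: "finite B0" "B0 \<subseteq> ?E" "cvs.span B0 = ?E"
    using assms(4) by (auto simp: finite_geom_mult_def)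
  obtain B where B: "B \<subseteq> ?E" "cvs.independent B" "?E \<subseteq> cvs.span B" "card B = cvs.dim ?E"
    using cvs.basis_exists by blast
  have fB: "finite B" using cvs.independent_span_bound[OF B0(1) B(2)] B(1) B0(3) by auto
  have "cvs.span B = ?E"
    using B(1,3) cvs.span_minimal[OF B(1) sub] by auto
  then show ?thesis using indep_onb[OF assms(1,2) fB B(2)] B(4) by (simp add: geom_mult_def)
qed

lemma fgm_of_bound:
  fixes \<iota> :: "'v::complex_inner \<Rightarrow> 'w::complex_inner"
  assumes "clinear \<iota>" "inj \<iota>" "clinear T"
    and bound: "\<And>Q. finite Q \<Longrightarrow> orthonormal Q \<Longrightarrow> Q \<subseteq> \<iota> ` eigenspace \<iota> T \<mu> \<Longrightarrow> card Q \<le> m"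
  shows "finite_geom_mult \<iota> T \<mu>"
proof -
  let ?E = "eigenspace \<iota> T \<mu>"
  have sub: "cvs.subspace ?E" by (rule eigenspace_subspace[OF assms(1,3)])
  obtain B where B: "B \<subseteq> ?E" "cvs.independent B" "?E \<subseteq> cvs.span B"
    using cvs.maximal_independent_subset by blast
  have spB: "cvs.span B' \<subseteq> ?E" if "B' \<subseteq> B" for B'
    using cvs.span_minimal[OF _ sub] B(1) that by blast
  have "finite B"
  proof (rule ccontr)
    assume "infinite B"
    then obtain B' where B': "B' \<subseteq> B" "finite B'" "card B' = Suc m"
      using infinite_arbitrarily_large by blast
    have "cvs.independent B'" using cvs.independent_mono[OF B(2) B'(1)] .
    then obtain Q where Q: "finite Q" "orthonormal Q" "cvs.span Q = \<iota> ` cvs.span B'" "card Q = card B'"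
      using indep_onb[OF assms(1,2) B'(2)] by blast
    have "Q \<subseteq> \<iota> ` ?E" using Q(3) cvs.span_superset[of Q] spB[OF B'(1)] by blast
    then show False using bound[OF Q(1,2)] Q(4) B'(3) by simp
  qed
  moreover have "cvs.span B = ?E" using B(3) spB[of B] by auto
  ultimately show ?thesis using B(1) by (auto simp: finite_geom_mult_def)
qed


lemma tri: "cmod (a - c) \<le> cmod (a - b) + cmod (b - c)"
  using norm_triangle_ineq[of "a - b" "b - c"] by simp

lemma resolvent_shift:
  assumes "resolvent_ok \<iota> T z"
  shows "resolvent \<iota> T z (a *\<^sub>C \<iota> v - T v) = \<iota> v - (z - a) *\<^sub>C resolvent \<iota> T z (\<iota> v)"
proof -
  have Rl: "clinear (resolvent \<iota> T z)" by (rule resolvent_clinear[OF assms])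
  have "a *\<^sub>C \<iota> v - T v = (z *\<^sub>C \<iota> v - T v) - (z - a) *\<^sub>C \<iota> v"
    by (simp add: cvs.scale_left_diff_distrib algebra_simps)
  then have "resolvent \<iota> T z (a *\<^sub>C \<iota> v - T v) =
      resolvent \<iota> T z (z *\<^sub>C \<iota> v - T v) - resolvent \<iota> T z ((z - a) *\<^sub>C \<iota> v)"
    by (simp only: clinear_diff[OF Rl])
  then show ?thesis
    by (simp only: clinear_scale[OF Rl] resolvent_apply[OF assms])
qed

lemma clinear_minus: "clinear f \<Longrightarrow> f (- x) = - f x"
  using clinear_diff[of f 0 x] clinear_zero[of f] by simp

lemma local_structure:
  fixes \<iota> :: "'v::complex_inner \<Rightarrow> 'w::complex_inner" and T :: "'v \<Rightarrow> 'w"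
  assumes cl: "clinear \<iota>" "inj \<iota>" "clinear T" and sym: "symmetric_op \<iota> T"
    and r: "real (Suc m) * r\<^sup>2 < 1"
    and closeA: "\<And>\<mu> v. cmod (\<mu> - lam) \<le> \<delta> \<Longrightarrow> v \<in> eigenspace \<iota> T \<mu> \<Longrightarrow> norm (\<iota> v) = 1
                   \<Longrightarrow> \<exists>y\<in>cvs.span QE. norm (\<iota> v - y) \<le> r"
    and QE: "finite QE" "orthonormal QE" "card QE = m"
  defines "Sig \<equiv> {\<mu>. is_eigenvalue \<iota> T \<mu> \<and> cmod (\<mu> - lam) < \<delta>}"
  shows "finite Sig \<and> (\<forall>\<mu>\<in>Sig. finite_geom_mult \<iota> T \<mu>) \<and> (\<Sum>\<mu>\<in>Sig. geom_mult \<iota> T \<mu>) \<le> m \<and>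
         (\<exists>U. finite U \<and> orthonormal U \<and> card U = (\<Sum>\<mu>\<in>Sig. geom_mult \<iota> T \<mu>) \<and>
              (\<forall>\<nu> e. cmod (\<nu> - lam) < \<delta> \<longrightarrow> e \<in> eigenspace \<iota> T \<nu> \<longrightarrow> \<iota> e \<in> cvs.span U))"
proof -
  have r1: "r\<^sup>2 < 1"
  proof -
    have "r\<^sup>2 \<le> real (Suc m) * r\<^sup>2" by (simp add: mult_le_cancel_right1)
    then show ?thesis using r by linarith
  qed
  have step1: "card F \<le> m" if F: "finite F" "orthonormal F"
    "\<forall>f\<in>F. \<exists>\<mu> v. cmod (\<mu> - lam) \<le> \<delta> \<and> v \<in> eigenspace \<iota> T \<mu> \<and> f = \<iota> v" for F
  proof -
    have "\<exists>y\<in>cvs.span QE. norm (f - y) \<le> r" if "f \<in> F" for f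
    proof -
      from bspec[OF F(3) that] obtain \<mu> v where h: "cmod (\<mu> - lam) \<le> \<delta>" "v \<in> eigenspace \<iota> T \<mu>" "f = \<iota> v"
        by (elim exE conjE)
      have "norm f = 1" using F(2) that by (simp add: orthonormal_def)
      then have "norm (\<iota> v) = 1" using h(3) by simp
      from closeA[OF h(1,2) this] show ?thesis unfolding h(3) .
    qed
    from counting[OF QE(2,1) F(2,1) this]
    have c: "real (card F) * (1 - r\<^sup>2) \<le> real m" unfolding QE(3) .
    show ?thesis
    proof (rule ccontr)
      assume "\<not> card F \<le> m"
      then have "real (Suc m) \<le> real (card F)" by simp
      then have "real (Suc m) * (1 - r\<^sup>2) \<le> real (card F) * (1 - r\<^sup>2)"
        using r1 by (intro mult_right_mono) auto
      then have "real (Suc m) * (1 - r\<^sup>2) \<le> real m" using c by linarith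
      moreover have "real (Suc m) * (1 - r\<^sup>2) = real (Suc m) - real (Suc m) * r\<^sup>2"
        by (simp only: right_diff_distrib mult_1_right)
      moreover have "real (Suc m) = real m + 1" by simp
      ultimately show False using r by linarith
    qed
  qed
  have fgm: "finite_geom_mult \<iota> T \<mu>" if "cmod (\<mu> - lam) \<le> \<delta>" for \<mu>
  proof (rule fgm_of_bound[OF cl])
    fix Q assume Q: "finite Q" "orthonormal Q" "Q \<subseteq> \<iota> ` eigenspace \<iota> T \<mu>"
    show "card Q \<le> m" using step1[OF Q(1,2)] Q(3) that by blast
  qed
  have "\<forall>\<mu>\<in>Sig. \<exists>Q. finite Q \<and> orthonormal Q \<and> cvs.span Q = \<iota> ` eigenspace \<iota> T \<mu> \<and> card Q = geom_mult \<iota> T \<mu>"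
    using eig_onb[OF cl fgm] by (auto simp: Sig_def)
  from bchoice[OF this] obtain Qf where Qf0: "\<forall>\<mu>\<in>Sig. finite (Qf \<mu>) \<and> orthonormal (Qf \<mu>) \<and>
       cvs.span (Qf \<mu>) = \<iota> ` eigenspace \<iota> T \<mu> \<and> card (Qf \<mu>) = geom_mult \<iota> T \<mu>"
    by blast
  have Qfin: "finite (Qf \<mu>)" and Qon: "orthonormal (Qf \<mu>)"
    and Qspan: "cvs.span (Qf \<mu>) = \<iota> ` eigenspace \<iota> T \<mu>" and Qcard: "card (Qf \<mu>) = geom_mult \<iota> T \<mu>"
    if "\<mu> \<in> Sig" for \<mu>
    using Qf0 that by auto
  have Qsub: "Qf \<mu> \<subseteq> \<iota> ` eigenspace \<iota> T \<mu>" if "\<mu> \<in> Sig" for \<mu>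
    using Qspan[OF that] cvs.span_superset[of "Qf \<mu>"] by blast
  have gm1: "1 \<le> geom_mult \<iota> T \<mu>" if mu: "\<mu> \<in> Sig" for \<mu>
  proof -
    obtain v where v: "v \<noteq> 0" "v \<in> eigenspace \<iota> T \<mu>" using mu by (auto simp: Sig_def is_eigenvalue_def)
    have "\<iota> v \<noteq> 0" using v(1) cl(2) clinear_zero[OF cl(1)] by (metis injD)
    moreover have "\<iota> v \<in> cvs.span (Qf \<mu>)" using Qspan[OF mu] v(2) by blast
    ultimately have "Qf \<mu> \<noteq> {}" by auto
    then have "0 < card (Qf \<mu>)" using Qfin[OF mu] by (simp add: card_gt_0_iff)
    then show ?thesis using Qcard[OF mu] by simp
  qed
  have union: "finite (\<Union>(Qf ` S')) \<and> orthonormal (\<Union>(Qf ` S')) \<and>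
               card (\<Union>(Qf ` S')) = (\<Sum>\<mu>\<in>S'. geom_mult \<iota> T \<mu>)" if S': "finite S'" "S' \<subseteq> Sig" for S'
  proof -
    have cross: "cinner x y = 0" if cr: "\<mu> \<in> S'" "\<mu>' \<in> S'" "\<mu> \<noteq> \<mu>'" "x \<in> Qf \<mu>" "y \<in> Qf \<mu>'" for \<mu> \<mu>' x y
    proof -
      have "x \<in> \<iota> ` eigenspace \<iota> T \<mu>" using Qsub[of \<mu>] cr(1,4) S'(2) by blast
      then obtain e where e: "x = \<iota> e" "e \<in> eigenspace \<iota> T \<mu>" by (rule imageE)
      have "y \<in> \<iota> ` eigenspace \<iota> T \<mu>'" using Qsub[of \<mu>'] cr(2,5) S'(2) by blast
      then obtain e' where e': "y = \<iota> e'" "e' \<in> eigenspace \<iota> T \<mu>'" by (rule imageE)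
      show ?thesis unfolding e(1) e'(1) by (rule eig_orth[OF sym e(2) e'(2) cr(3)])
    qed
    have disj: "Qf \<mu> \<inter> Qf \<mu>' = {}" if "\<mu> \<in> S'" "\<mu>' \<in> S'" "\<mu> \<noteq> \<mu>'" for \<mu> \<mu>'
    proof (rule ccontr)
      assume "Qf \<mu> \<inter> Qf \<mu>' \<noteq> {}"
      then obtain x where "x \<in> Qf \<mu>" "x \<in> Qf \<mu>'" by blast
      then have "cinner x x = 0" using cross[OF that] by blast
      moreover have "norm x = 1" using Qon[of \<mu>] \<open>x \<in> Qf \<mu>\<close> that(1) S'(2) unfolding orthonormal_def by blast
      ultimately show False by simp
    qed
    have fin: "finite (\<Union>(Qf ` S'))"
      by (rule finite_UN_I[OF S'(1)]) (use Qfin S'(2) in blast)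
    have orth: "orthonormal (\<Union>(Qf ` S'))"
      unfolding orthonormal_def
    proof safe
      fix x \<mu> assume "\<mu> \<in> S'" "x \<in> Qf \<mu>"
      then show "norm x = 1" using Qon[of \<mu>] S'(2) unfolding orthonormal_def by blast
    next
      fix x y \<mu> \<mu>' assume a: "\<mu> \<in> S'" "x \<in> Qf \<mu>" "\<mu>' \<in> S'" "y \<in> Qf \<mu>'" "x \<noteq> y"
      show "cinner x y = 0"
      proof (cases "\<mu> = \<mu>'")
        case True
        then show ?thesis using a Qon[of \<mu>] S'(2) unfolding orthonormal_def by blast
      next
        case False
        then show ?thesis using cross a by blast
      qed
    qed
    have "card (\<Union>(Qf ` S')) = (\<Sum>\<mu>\<in>S'. card (Qf \<mu>))"
      using S' Qfin disj by (intro card_UN_disjoint) blast+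
    also have "\<dots> = (\<Sum>\<mu>\<in>S'. geom_mult \<iota> T \<mu>)"
      using S'(2) Qcard by (intro sum.cong) blast+
    finally show ?thesis using fin orth by blast
  qed
  have bound: "(\<Sum>\<mu>\<in>S'. geom_mult \<iota> T \<mu>) \<le> m" if S': "finite S'" "S' \<subseteq> Sig" for S'
  proof -
    have "\<forall>f\<in>\<Union>(Qf ` S'). \<exists>\<mu> v. cmod (\<mu> - lam) \<le> \<delta> \<and> v \<in> eigenspace \<iota> T \<mu> \<and> f = \<iota> v"
    proof
      fix f assume "f \<in> \<Union>(Qf ` S')"
      then obtain \<mu> where mu: "\<mu> \<in> S'" "f \<in> Qf \<mu>" by blast
      then have "\<mu> \<in> Sig" using S'(2) by blast
      then have "cmod (\<mu> - lam) \<le> \<delta>" by (simp add: Sig_def)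
      moreover have "f \<in> \<iota> ` eigenspace \<iota> T \<mu>" using Qsub[OF \<open>\<mu> \<in> Sig\<close>] mu(2) by blast
      then obtain v where "f = \<iota> v" "v \<in> eigenspace \<iota> T \<mu>" by (rule imageE)
      ultimately show "\<exists>\<mu> v. cmod (\<mu> - lam) \<le> \<delta> \<and> v \<in> eigenspace \<iota> T \<mu> \<and> f = \<iota> v" by blast
    qed
    then show ?thesis using step1[of "\<Union>(Qf ` S')"] union[OF S'] by simp
  qed
  have finSig: "finite Sig"
  proof (rule ccontr)
    assume "infinite Sig"
    then obtain S' where S': "S' \<subseteq> Sig" "finite S'" "card S' = Suc m"
      using infinite_arbitrarily_large by blast
    have "card S' = (\<Sum>\<mu>\<in>S'. 1)" by simp
    also have "\<dots> \<le> (\<Sum>\<mu>\<in>S'. geom_mult \<iota> T \<mu>)" using gm1 S'(1) by (intro sum_mono) auto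
    also have "\<dots> \<le> m" using bound[OF S'(2,1)] .
    finally show False using S'(3) by simp
  qed
  have spanU: "\<iota> e \<in> cvs.span (\<Union>(Qf ` Sig))" if "cmod (\<nu> - lam) < \<delta>" "e \<in> eigenspace \<iota> T \<nu>" for \<nu> e
  proof (cases "e = 0")
    case True
    then show ?thesis by (simp add: clinear_zero[OF cl(1)] cvs.span_zero)
  next
    case False
    then have \<nu>: "\<nu> \<in> Sig" using that by (auto simp: Sig_def is_eigenvalue_def)
    have "\<iota> e \<in> cvs.span (Qf \<nu>)" unfolding Qspan[OF \<nu>] using that(2) by (rule imageI)
    moreover have "cvs.span (Qf \<nu>) \<subseteq> cvs.span (\<Union>(Qf ` Sig))" using \<nu> by (intro cvs.span_mono) blast
    ultimately show ?thesis by blast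
  qed
  have "\<forall>\<mu>\<in>Sig. finite_geom_mult \<iota> T \<mu>" using fgm by (simp add: Sig_def)
  moreover have "\<exists>U. finite U \<and> orthonormal U \<and> card U = (\<Sum>\<mu>\<in>Sig. geom_mult \<iota> T \<mu>) \<and>
              (\<forall>\<nu> e. cmod (\<nu> - lam) < \<delta> \<longrightarrow> e \<in> eigenspace \<iota> T \<nu> \<longrightarrow> \<iota> e \<in> cvs.span U)"
    using union[OF finSig order_refl] spanU by blast
  ultimately show ?thesis using finSig bound[OF finSig order_refl] by blast
qed

theorem theoremt:
  fixes \<iota> :: "'v::chilbert_space \<Rightarrow> 'w::chilbert_space"
    and L :: "'v \<Rightarrow> 'w"
    and LN :: "nat \<Rightarrow> 'v \<Rightarrow> 'w"
    and lam :: complex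
    and \<delta> :: real
  assumes incl: "bounded_clinear \<iota>" "inj \<iota>" "closure (range \<iota>) = UNIV"
    and sep: "\<exists>D::'v set. countable D \<and> closure D = UNIV"
    and L_bdd: "bounded_clinear L"
    and L_sa: "self_adjoint_on \<iota> L"
    and L_pp: "pure_point_spectrum \<iota> L"
    and LN_bdd: "\<And>N. bounded_clinear (LN N)"
    and LN_sa: "\<And>N. self_adjoint_on \<iota> (LN N)"
    and LN_pp: "\<And>N. pure_point_spectrum \<iota> (LN N)"
    and eig: "is_eigenvalue \<iota> L lam"
    and fin: "finite_geom_mult \<iota> L lam"
    and \<delta>_pos: "\<delta> > 0"
    and gap: "\<And>\<mu>. \<mu> \<in> cspectrum \<iota> L \<Longrightarrow> \<mu> \<noteq> lam \<Longrightarrow> cmod (\<mu> - lam) > 3 * \<delta>"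
    and inv: "\<exists>N0. \<forall>N > N0. \<forall>z. \<delta> \<le> cmod (z - lam) \<and> cmod (z - lam) \<le> 2 * \<delta>
                 \<longrightarrow> resolvent_ok \<iota> (LN N) z"
    and conv1: "\<forall>\<epsilon>>0. \<exists>N1. \<forall>N > N1. \<forall>z \<mu> v.
                  \<delta> \<le> cmod (z - lam) \<and> cmod (z - lam) \<le> 2 * \<delta> \<and>
                  cmod (\<mu> - lam) \<le> \<delta> \<and> v \<in> eigenspace \<iota> (LN N) \<mu> \<and> norm (\<iota> v) = 1
                  \<longrightarrow> norm (resolvent \<iota> L z (L v - LN N v)) < \<epsilon>"
    and conv2: "\<And>\<mu> u. cmod (\<mu> - lam) \<le> \<delta> \<Longrightarrow> u \<in> eigenspace \<iota> L \<mu> \<Longrightarrow> norm (\<iota> u) = 1 \<Longrightarrow>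
                  \<forall>\<epsilon>>0. \<exists>N1. \<forall>N > N1. \<forall>z.
                  \<delta> \<le> cmod (z - lam) \<and> cmod (z - lam) \<le> 2 * \<delta>
                  \<longrightarrow> norm (resolvent \<iota> (LN N) z (L u - LN N u)) < \<epsilon>"
  shows "\<exists>N0'. \<forall>N > N0'.
           finite {\<mu>. is_eigenvalue \<iota> (LN N) \<mu> \<and> cmod (\<mu> - lam) < \<delta>} \<and>
           (\<forall>\<mu>. is_eigenvalue \<iota> (LN N) \<mu> \<and> cmod (\<mu> - lam) < \<delta> \<longrightarrow> finite_geom_mult \<iota> (LN N) \<mu>) \<and>
           geom_mult \<iota> L lam =
             (\<Sum>\<mu> \<in> {\<mu>. is_eigenvalue \<iota> (LN N) \<mu> \<and> cmod (\<mu> - lam) < \<delta>}. geom_mult \<iota> (LN N) \<mu>)"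
proof -
  have clI: "clinear \<iota>" using incl(1) by (simp add: bounded_clinear_def)
  have clL: "clinear L" using L_bdd by (simp add: bounded_clinear_def)
  have clN: "clinear (LN N)" for N using LN_bdd[of N] by (simp add: bounded_clinear_def)
  have symL: "symmetric_op \<iota> L" using L_sa by (rule self_adjoint_symmetric)
  have symN: "symmetric_op \<iota> (LN N)" for N using LN_sa[of N] by (rule self_adjoint_symmetric)
  let ?E = "eigenspace \<iota> L lam"
  define m where "m = geom_mult \<iota> L lam"
  obtain QE where QE: "finite QE" "orthonormal QE" "cvs.span QE = \<iota> ` ?E" "card QE = m"
    using eig_onb[OF clI incl(2) clL fin] unfolding m_def by blast
  define \<epsilon> where "\<epsilon> = 1 / (4 * real (Suc m))"
  have eps: "\<epsilon> > 0" by (simp add: \<epsilon>_def)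
  define r where "r = 3 * \<epsilon>"
  have rbound: "real (Suc m) * r\<^sup>2 < 1"
  proof -
    define k where "k = real (Suc m)"
    have k: "k \<ge> 1" by (simp add: k_def)
    have "k * (3 * (1 / (4 * k)))\<^sup>2 = 9 / (16 * k)"
      using k by (simp add: power2_eq_square field_simps)
    also have "\<dots> < 1" using k by (simp add: divide_less_eq)
    finally show ?thesis by (simp add: k_def r_def \<epsilon>_def)
  qed
  obtain N0 where N0: "\<forall>N > N0. \<forall>z. \<delta> \<le> cmod (z - lam) \<and> cmod (z - lam) \<le> 2 * \<delta>
                 \<longrightarrow> resolvent_ok \<iota> (LN N) z"
    using inv by blast
  obtain N1 where N1: "\<forall>N > N1. \<forall>z \<mu> v.
                  \<delta> \<le> cmod (z - lam) \<and> cmod (z - lam) \<le> 2 * \<delta> \<and>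
                  cmod (\<mu> - lam) \<le> \<delta> \<and> v \<in> eigenspace \<iota> (LN N) \<mu> \<and> norm (\<iota> v) = 1
                  \<longrightarrow> norm (resolvent \<iota> L z (L v - LN N v)) < \<epsilon>"
    using conv1 eps by blast
  have "\<forall>q\<in>QE. \<exists>Nq. \<exists>u. u \<in> ?E \<and> q = \<iota> u \<and> (\<forall>N > Nq. \<forall>z.
                  \<delta> \<le> cmod (z - lam) \<and> cmod (z - lam) \<le> 2 * \<delta>
                  \<longrightarrow> norm (resolvent \<iota> (LN N) z (L u - LN N u)) < \<epsilon>)"
  proof
    fix q assume q: "q \<in> QE"
    then have "q \<in> \<iota> ` ?E" using QE(3) cvs.span_superset[of QE] by blast
    then obtain u where u: "q = \<iota> u" "u \<in> ?E" by (rule imageE)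
    have "norm q = 1" using QE(2) q by (simp add: orthonormal_def)
    then have nu: "norm (\<iota> u) = 1" using u(1) by simp
    have "cmod (lam - lam) \<le> \<delta>" using \<delta>_pos by simp
    from conv2[OF this u(2) nu] eps obtain Nq where "\<forall>N > Nq. \<forall>z.
                  \<delta> \<le> cmod (z - lam) \<and> cmod (z - lam) \<le> 2 * \<delta>
                  \<longrightarrow> norm (resolvent \<iota> (LN N) z (L u - LN N u)) < \<epsilon>" by blast
    then show "\<exists>Nq. \<exists>u. u \<in> ?E \<and> q = \<iota> u \<and> (\<forall>N > Nq. \<forall>z.
                  \<delta> \<le> cmod (z - lam) \<and> cmod (z - lam) \<le> 2 * \<delta>
                  \<longrightarrow> norm (resolvent \<iota> (LN N) z (L u - LN N u)) < \<epsilon>)"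
      using u by blast
  qed
  from bchoice[OF this] obtain Nf where Nf: "\<forall>q\<in>QE. \<exists>u. u \<in> ?E \<and> q = \<iota> u \<and> (\<forall>N > Nf q. \<forall>z.
                  \<delta> \<le> cmod (z - lam) \<and> cmod (z - lam) \<le> 2 * \<delta>
                  \<longrightarrow> norm (resolvent \<iota> (LN N) z (L u - LN N u)) < \<epsilon>)"
    by blast
  define N0' where "N0' = N0 + N1 + (\<Sum>q\<in>QE. Nf q)"
  show ?thesis
  proof (intro exI[of _ N0'] allI impI)
    fix N assume N: "N > N0'"
    have NN0: "N > N0" and NN1: "N > N1" using N by (simp_all add: N0'_def)
    have Nq: "N > Nf q" if "q \<in> QE" for q
    proof -
      have "Nf q \<le> (\<Sum>q\<in>QE. Nf q)" by (rule member_le_sum[OF that _ QE(1)]) simp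
      then show ?thesis using N by (simp add: N0'_def)
    qed
    define z where "z = lam + complex_of_real \<delta>"
    have zl: "cmod (z - lam) = \<delta>" using \<delta>_pos by (simp add: z_def)
    have ann: "\<delta> \<le> cmod (z - lam) \<and> cmod (z - lam) \<le> 2 * \<delta>" using zl \<delta>_pos by simp
    have rokN: "resolvent_ok \<iota> (LN N) z" using N0 NN0 ann by blast
    have rokL: "resolvent_ok \<iota> L z"
    proof (rule ccontr)
      assume "\<not> resolvent_ok \<iota> L z"
      then have "z \<in> cspectrum \<iota> L" by (simp add: cspectrum_def)
      moreover have "z \<noteq> lam" using zl \<delta>_pos by auto
      ultimately have "cmod (z - lam) > 3 * \<delta>" by (rule gap)
      then show False using zl \<delta>_pos by simp
    qed
    have spanE: "cvs.span (\<iota> ` (\<Union>\<nu>\<in>{lam}. eigenspace \<iota> L \<nu>)) = cvs.span QE"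
      by (simp add: QE(3)[symmetric] cvs.span_span)
    have closeA: "\<exists>y\<in>cvs.span QE. norm (\<iota> v - y) \<le> r"
      if a: "cmod (\<mu> - lam) \<le> \<delta>" "v \<in> eigenspace \<iota> (LN N) \<mu>" "norm (\<iota> v) = 1" for \<mu> v
    proof -
      have "\<delta> \<le> cmod (z - lam) \<and> cmod (z - lam) \<le> 2 * \<delta> \<and>
                  cmod (\<mu> - lam) \<le> \<delta> \<and> v \<in> eigenspace \<iota> (LN N) \<mu> \<and> norm (\<iota> v) = 1"
        using ann a by simp
      then have w: "norm (resolvent \<iota> L z (L v - LN N v)) < \<epsilon>" using N1 NN1 by blast
      have LNv: "LN N v = \<mu> *\<^sub>C \<iota> v" using a(2) by (simp add: eigenspace_def)
      have eq1: "L v - LN N v = - (\<mu> *\<^sub>C \<iota> v - L v)" unfolding LNv by simp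
      have "resolvent \<iota> L z (L v - LN N v) = - resolvent \<iota> L z (\<mu> *\<^sub>C \<iota> v - L v)"
        unfolding eq1 by (rule clinear_minus[OF resolvent_clinear[OF rokL]])
      also have "\<dots> = - (\<iota> v - (z - \<mu>) *\<^sub>C resolvent \<iota> L z (\<iota> v))"
        by (simp only: resolvent_shift[OF rokL])
      finally have "resolvent \<iota> L z (L v - LN N v) = - (\<iota> v - (z - \<mu>) *\<^sub>C resolvent \<iota> L z (\<iota> v))" .
      then have w': "norm ((z - \<mu>) *\<^sub>C resolvent \<iota> L z (\<iota> v) - \<iota> v) < \<epsilon>"
        using w by (simp add: norm_minus_commute)
      have hyp: "1 / 2 * cmod (z - \<nu>) \<le> cmod (\<nu> - \<mu>)"
        if h: "e \<in> eigenspace \<iota> L \<nu>" "e \<noteq> 0" "\<nu> \<notin> {lam}" for \<nu> e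
      proof -
        have "\<nu> \<in> cspectrum \<iota> L" using eig_not_resolvent[OF clI clL h(1,2)] by (simp add: cspectrum_def)
        then have g: "cmod (\<nu> - lam) > 3 * \<delta>" using gap h(3) by blast
        have t1: "cmod (z - \<nu>) \<le> cmod (z - lam) + cmod (lam - \<nu>)" by (rule tri)
        have t2: "cmod (\<nu> - lam) \<le> cmod (\<nu> - \<mu>) + cmod (\<mu> - lam)" by (rule tri)
        have t3: "cmod (lam - \<nu>) = cmod (\<nu> - lam)" by (rule norm_minus_commute)
        show ?thesis using t1 t2 t3 g zl a(1) by linarith
      qed
      obtain y where y: "y \<in> cvs.span (\<iota> ` (\<Union>\<nu>\<in>{lam}. eigenspace \<iota> L \<nu>))"
          "1 / 2 * norm (\<iota> v - y) \<le> norm ((z - \<mu>) *\<^sub>C resolvent \<iota> L z (\<iota> v) - \<iota> v) + \<epsilon> / 2"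
        using approx_lemma[OF clI clL symL L_pp rokL, of "1/2" "\<epsilon>/2" "{lam}" \<mu> "\<iota> v"] hyp eps
        by auto
      have "norm (\<iota> v - y) \<le> r" using y(2) w' by (simp add: r_def)
      then show ?thesis using y(1) spanE by blast
    qed
    let ?Sig = "{\<mu>. is_eigenvalue \<iota> (LN N) \<mu> \<and> cmod (\<mu> - lam) < \<delta>}"
    have LS: "finite ?Sig \<and> (\<forall>\<mu>\<in>?Sig. finite_geom_mult \<iota> (LN N) \<mu>) \<and>
         (\<Sum>\<mu>\<in>?Sig. geom_mult \<iota> (LN N) \<mu>) \<le> m \<and>
         (\<exists>U. finite U \<and> orthonormal U \<and> card U = (\<Sum>\<mu>\<in>?Sig. geom_mult \<iota> (LN N) \<mu>) \<and>
              (\<forall>\<nu> e. cmod (\<nu> - lam) < \<delta> \<longrightarrow> e \<in> eigenspace \<iota> (LN N) \<nu> \<longrightarrow> \<iota> e \<in> cvs.span U))"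
      by (rule local_structure[OF clI incl(2) clN symN rbound closeA QE(1,2,4)])
    then obtain U where U: "finite U" "orthonormal U" "card U = (\<Sum>\<mu>\<in>?Sig. geom_mult \<iota> (LN N) \<mu>)"
        "\<And>\<nu> e. cmod (\<nu> - lam) < \<delta> \<Longrightarrow> e \<in> eigenspace \<iota> (LN N) \<nu> \<Longrightarrow> \<iota> e \<in> cvs.span U"
      by blast
    have close2: "\<exists>y\<in>cvs.span U. norm (q - y) \<le> r" if q: "q \<in> QE" for q
    proof -
      obtain u where u: "u \<in> ?E" "q = \<iota> u" and
        conv: "\<forall>N > Nf q. \<forall>z. \<delta> \<le> cmod (z - lam) \<and> cmod (z - lam) \<le> 2 * \<delta>
                  \<longrightarrow> norm (resolvent \<iota> (LN N) z (L u - LN N u)) < \<epsilon>"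
        using Nf q by blast
      have w: "norm (resolvent \<iota> (LN N) z (L u - LN N u)) < \<epsilon>" using conv Nq[OF q] ann by blast
      have Lu: "L u = lam *\<^sub>C \<iota> u" using u(1) by (simp add: eigenspace_def)
      have w': "norm ((z - lam) *\<^sub>C resolvent \<iota> (LN N) z (\<iota> u) - \<iota> u) < \<epsilon>"
        using w resolvent_shift[OF rokN, of lam u] unfolding Lu by (simp add: norm_minus_commute)
      have hyp: "1 / 2 * cmod (z - \<nu>) \<le> cmod (\<nu> - lam)"
        if h: "e \<in> eigenspace \<iota> (LN N) \<nu>" "e \<noteq> 0" "\<nu> \<notin> {\<nu>. cmod (\<nu> - lam) < \<delta>}" for \<nu> e
      proof -
        have t1: "cmod (z - \<nu>) \<le> cmod (z - lam) + cmod (lam - \<nu>)" by (rule tri)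
        have t3: "cmod (lam - \<nu>) = cmod (\<nu> - lam)" by (rule norm_minus_commute)
        show ?thesis using t1 t3 zl h(3) by simp
      qed
      obtain y where y: "y \<in> cvs.span (\<iota> ` (\<Union>\<nu>\<in>{\<nu>. cmod (\<nu> - lam) < \<delta>}. eigenspace \<iota> (LN N) \<nu>))"
          "1 / 2 * norm (\<iota> u - y) \<le> norm ((z - lam) *\<^sub>C resolvent \<iota> (LN N) z (\<iota> u) - \<iota> u) + \<epsilon> / 2"
        using approx_lemma[OF clI clN symN LN_pp rokN, of "1/2" "\<epsilon>/2" "{\<nu>. cmod (\<nu> - lam) < \<delta>}" lam "\<iota> u"] hyp eps
        by auto
      have "\<iota> ` (\<Union>\<nu>\<in>{\<nu>. cmod (\<nu> - lam) < \<delta>}. eigenspace \<iota> (LN N) \<nu>) \<subseteq> cvs.span U"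
        using U(4) by blast
      then have "cvs.span (\<iota> ` (\<Union>\<nu>\<in>{\<nu>. cmod (\<nu> - lam) < \<delta>}. eigenspace \<iota> (LN N) \<nu>)) \<subseteq> cvs.span U"
        by (rule cvs.span_minimal[OF _ cvs.subspace_span])
      moreover have "norm (q - y) \<le> r" using y(2) w' u(2) by (simp add: r_def)
      ultimately show ?thesis using y(1) by blast
    qed
    have cnt: "real (card QE) * (1 - r\<^sup>2) \<le> real (card U)"
      by (rule counting[OF U(2,1) QE(2,1) close2])
    define D where "D = (\<Sum>\<mu>\<in>?Sig. geom_mult \<iota> (LN N) \<mu>)"
    have Dm: "D \<le> m" using LS by (simp add: D_def)
    have "m = D"
    proof (rule ccontr)
      assume "m \<noteq> D"
      then have "D + 1 \<le> m" using Dm by simp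
      then have "real D \<le> real m - 1" by linarith
      moreover have "real m * (1 - r\<^sup>2) \<le> real D" using cnt QE(4) U(3) by (simp add: D_def)
      moreover have "real m * (1 - r\<^sup>2) = real m - real m * r\<^sup>2" by (simp only: right_diff_distrib mult_1_right)
      moreover have "real m * r\<^sup>2 \<le> real (Suc m) * r\<^sup>2" by (rule mult_right_mono) simp_all
      ultimately show False using rbound by linarith
    qed
    then show "finite ?Sig \<and>
           (\<forall>\<mu>. is_eigenvalue \<iota> (LN N) \<mu> \<and> cmod (\<mu> - lam) < \<delta> \<longrightarrow> finite_geom_mult \<iota> (LN N) \<mu>) \<and>
           geom_mult \<iota> L lam = (\<Sum>\<mu> \<in> ?Sig. geom_mult \<iota> (LN N) \<mu>)"
      using LS by (simp add: D_def m_def)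
  qed
qed

end
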